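(* Let $a>0$ and $0<h\le\frac{1}{3a}$, and let $\alpha_1$ be the smallest positive solution $q$ of $\tan(hq)=\frac{2aq}{q^2-a^2}$. Define, for $z,w\in[0,h]$ and $t>s$, $$P_1(z,t,w,s)=\frac{2e^{-\alpha_1^2(t-s)}[\alpha_1\cos(\alpha_1 z)+a\sin(\alpha_1 z)][\alpha_1\cos(\alpha_1 w)+a\sin(\alpha_1 w)]}{2a+h(a^2+\alpha_1^2)}.$$ Then for all $0\le z,w\le h$ and $t>s$, $$\left|P_1(z,t,w,s)-\frac{\alpha_1^2}{2a}e^{-\alpha_1^2(t-s)}\right|\le\frac52\,h\alpha_1^2e^{-\alpha_1^2(t-s)}.$$ *)

theory Defs
  imports "HOL-Analysis.Analysis"
begin

definition eig_eq :: "real \<Rightarrow> real \<Rightarrow> real \<Rightarrow> bool" where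
  "eig_eq a h q \<longleftrightarrow> tan (h * q) = 2 * a * q / (q\<^sup>2 - a\<^sup>2)"

definition smallest_pos_eig :: "real \<Rightarrow> real \<Rightarrow> real \<Rightarrow> bool" where
  "smallest_pos_eig a h \<alpha> \<longleftrightarrow> \<alpha> > 0 \<and> eig_eq a h \<alpha> \<and> (\<forall>q. 0 < q \<and> eig_eq a h q \<longrightarrow> \<alpha> \<le> q)"

definition P1 :: "real \<Rightarrow> real \<Rightarrow> real \<Rightarrow> real \<Rightarrow> real \<Rightarrow> real \<Rightarrow> real \<Rightarrow> real" where
  "P1 a h \<alpha> z t w s =
     2 * exp (- \<alpha>\<^sup>2 * (t - s)) * (\<alpha> * cos (\<alpha> * z) + a * sin (\<alpha> * z))
       * (\<alpha> * cos (\<alpha> * w) + a * sin (\<alpha> * w)) / (2 * a + h * (a\<^sup>2 + \<alpha>\<^sup>2))"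

end

theory Submission
  imports Defs
begin

lemma xcos_le_sin:
  fixes x :: real assumes "0 \<le> x" "x \<le> pi" shows "x * cos x \<le> sin x"
proof -
  let ?f = "\<lambda>x. sin x - x * cos x"
  have "?f 0 \<le> ?f x"
  proof (rule DERIV_nonneg_imp_nondecreasing [OF assms(1)])
    fix u assume u: "0 \<le> u" "u \<le> x"
    have "(?f has_real_derivative u * sin u) (at u)"
      by (auto intro!: derivative_eq_intros simp: field_simps)
    moreover have "0 \<le> u * sin u"
      using assms u by (simp add: sin_ge_zero)
    ultimately show "\<exists>y. (?f has_real_derivative y) (at u) \<and> 0 \<le> y" by blast
  qed
  then show ?thesis by simp
qed

lemma cos_ge_quad:
  fixes x :: real shows "1 - x\<^sup>2 / 2 \<le> cos x"
proof -
  have "cos x = cos (2 * (x/2))" by simp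
  also have "\<dots> = 1 - 2 * (sin (x/2))\<^sup>2" by (rule cos_double_sin)
  finally have c: "cos x = 1 - 2 * (sin (x/2))\<^sup>2" .
  have "\<bar>sin (x/2)\<bar> \<le> \<bar>x/2\<bar>" by (rule abs_sin_x_le_abs_x)
  then have "(sin (x/2))\<^sup>2 \<le> (x/2)\<^sup>2"
    by (metis abs_le_square_iff)
  then show ?thesis using c by (simp add: power_divide)
qed

lemma const_ineq:
  fixes b :: real assumes b: "0 < b"
  shows "(2+2*b)/(2+b) \<le> (b * (2 + b) / (1 + b)) / (2*b) + 5/2 * (b * (2 + b) / (1 + b))"
proof -
  have bb: "1 + b \<noteq> 0" "2 + b \<noteq> 0" "b \<noteq> 0" "(1+b)*(2*b) \<noteq> 0" "2*(1+b) \<noteq> 0" using b by auto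
  have e: "(b * (2 + b) / (1 + b)) / (2*b) = (2+b)/(2*(1+b))"
    unfolding divide_divide_eq_left by (subst frac_eq_eq[OF bb(4) bb(5)]) (simp add: algebra_simps)
  have "(2+b)/(2*(1+b)) + 5/2 * (b * (2 + b) / (1 + b)) - (2+2*b)/(2+b) = (16*b+17*b^2+5*b^3)/(2*(1+b)*(2+b))"
    using bb by (simp add: divide_simps) (simp add: algebra_simps power2_eq_square power3_eq_cube)
  moreover have "(16*b+17*b^2+5*b^3)/(2*(1+b)*(2+b)) \<ge> 0" using b by simp
  ultimately show ?thesis using e by linarith
qed

lemma poly_up:
  fixes b y :: real assumes b: "0 < b" "b \<le> 1/3" and y1: "y * (1 + b) \<ge> 2*b + b\<^sup>2" and y2: "y \<le> 2*b+b\<^sup>2"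
  shows "2 * (y + b\<^sup>2) / (2*b + b\<^sup>2 + y) \<le> y / (2*b) + 5/2 * y"
proof -
  have yp: "y \<ge> b * (2 + b) / (1 + b)" using y1 b by (simp add: field_simps power2_eq_square)
  have "b * (2 + b) / (1 + b) > 0" using b by simp
  hence "y > 0" using yp by linarith
  have "2 * (y + b\<^sup>2) / (2*b + b\<^sup>2 + y) \<le> (2+2*b)/(2+b)"
    using b y2 \<open>y>0\<close> by (simp add: field_simps power2_eq_square)
  moreover have "y / (2*b) + 5/2 * y \<ge> (b * (2 + b) / (1 + b)) / (2*b) + 5/2 * (b * (2 + b) / (1 + b))"
    using yp b by (intro add_mono divide_right_mono mult_left_mono) auto
  moreover have "(2+2*b)/(2+b) \<le> (b * (2 + b) / (1 + b)) / (2*b) + 5/2 * (b * (2 + b) / (1 + b))"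
    by (rule const_ineq[OF b(1)])
  ultimately show ?thesis by linarith
qed

lemma poly_low:
  fixes b y :: real assumes b: "0 < b" "b \<le> 1/3" and y0: "0 < y" and y2: "y \<le> 2*b+b\<^sup>2"
  shows "2 * (1 - y/2)\<^sup>2 / (2*b + b\<^sup>2 + y) \<ge> 1 / (2*b) - 5/2"
proof -
  define c where "c = 2*b+b\<^sup>2"
  have "b\<^sup>2 \<le> 1/9" using power_mono[of b "1/3" 2] b by (simp add: power_divide)
  moreover have "b\<^sup>2 \<ge> 0" by simp
  ultimately have c0: "0 < c" "c \<le> 7/9" using b unfolding c_def by linarith+
  have "(1 - c/2)\<^sup>2 \<le> (1 - y/2)\<^sup>2"
    using c0 y2 c_def by (intro power_mono) auto
  hence "2 * (1 - c/2)\<^sup>2 / (2*c) \<le> 2 * (1 - y/2)\<^sup>2 / (2*b + b\<^sup>2 + y)"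
    using y2 y0 c0 by (intro frac_le) (auto simp: c_def)
  moreover have "2 * (1 - c/2)\<^sup>2 / (2*c) \<ge> 1 / (2*b) - 5/2"
  proof -
    have bb: "b \<noteq> 0" "c \<noteq> 0" using b c0 by auto
    have "(1 - c/2)\<^sup>2 \<ge> 1 - c" by (simp add: power2_eq_square algebra_simps)
    hence "(1 - c)/c \<le> (1 - c/2)\<^sup>2 / c" using c0 by (intro divide_right_mono) auto
    moreover have "2 * (1 - c/2)\<^sup>2 / (2*c) = (1 - c/2)\<^sup>2 / c" by simp
    moreover have "(1-c)/c - (1/(2*b) - 5/2) = (5*b^2+3*b^3)/(2*b*c)"
      using bb unfolding c_def by (simp add: divide_simps) (simp add: algebra_simps power2_eq_square power3_eq_cube)
    moreover have "(5*b^2+3*b^3)/(2*b*c) \<ge> 0" using b c0 by simp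
    ultimately show ?thesis by linarith
  qed
  ultimately show ?thesis by linarith
qed

lemma root_exists:
  fixes a h :: real assumes "a > 0" "h > 0" "a * h \<le> 1/3"
  shows "\<exists>q. 0 < q \<and> h * q < pi/2 \<and> eig_eq a h q"
proof -
  define b where "b = a * h"
  define g where "g = (\<lambda>x. sin x * (x\<^sup>2 - b\<^sup>2) - 2 * b * x * cos x)"
  have b0: "0 < b" "b \<le> 1/3" using assms by (auto simp: b_def)
  have bpi: "b < pi/2" using b0 pi_gt3 by linarith
  have cb: "cos b > 0" using b0 bpi by (intro cos_gt_zero) auto
  have gb: "g b < 0" using b0 cb by (simp add: g_def)
  have "b\<^sup>2 < (pi/2)\<^sup>2" using b0 bpi by (intro power_strict_mono) auto
  hence gp: "g (pi/2) > 0" by (simp add: g_def)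
  have cont: "continuous_on {b..pi/2} g" unfolding g_def by (intro continuous_intros)
  obtain x where x: "b \<le> x" "x \<le> pi/2" "g x = 0"
    using IVT'[of g b 0 "pi/2"] gb gp bpi cont by auto
  have xb1: "x \<noteq> b" using x gb by auto
  have xb2: "x \<noteq> pi/2"
  proof
    assume xe: "x = pi/2"
    show False using gp x(3) xe by (metis less_irrefl)
  qed
  have x1: "b < x" "x < pi/2" using x xb1 xb2 by auto
  have cx: "cos x > 0" using x1 b0 by (intro cos_gt_zero) auto
  have "b\<^sup>2 < x\<^sup>2" using x1 b0 by (intro power_strict_mono) auto
  hence d: "x\<^sup>2 - b\<^sup>2 > 0" by simp
  have "sin x * (x\<^sup>2 - b\<^sup>2) = 2 * b * x * cos x" using x(3) by (simp add: g_def)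
  hence t: "tan x = 2 * b * x / (x\<^sup>2 - b\<^sup>2)" using cx d
    by (simp add: tan_def field_simps)
  define q where "q = x / h"
  have hq: "h * q = x" using assms by (simp add: q_def)
  have "2 * a * q / (q\<^sup>2 - a\<^sup>2) = 2 * b * x / (x\<^sup>2 - b\<^sup>2)"
    using assms d unfolding q_def b_def by (simp add: field_simps power2_eq_square)
  hence "eig_eq a h q" unfolding eig_eq_def using hq t by simp
  moreover have "0 < q" using x1 b0 assms by (simp add: q_def)
  ultimately show ?thesis using hq x1 by auto
qed

theorem lemma3p4:
  fixes a h \<alpha> z w t s :: real
  assumes "a > 0" and "0 < h" and "h \<le> 1 / (3 * a)"
    and "smallest_pos_eig a h \<alpha>"
    and "0 \<le> z" and "z \<le> h" and "0 \<le> w" and "w \<le> h" and "t > s"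
  shows "\<bar>P1 a h \<alpha> z t w s - \<alpha>\<^sup>2 / (2 * a) * exp (- \<alpha>\<^sup>2 * (t - s))\<bar>
           \<le> 5 / 2 * h * \<alpha>\<^sup>2 * exp (- \<alpha>\<^sup>2 * (t - s))"
proof -
  have a0: "a > 0" and h0: "h > 0" using assms by auto
  have ah: "a * h \<le> 1/3" using assms(1,3) by (simp add: field_simps)
  have al0: "\<alpha> > 0" and eig: "eig_eq a h \<alpha>" and mn: "\<And>q. 0 < q \<Longrightarrow> eig_eq a h q \<Longrightarrow> \<alpha> \<le> q"
    using assms(4) unfolding smallest_pos_eig_def by auto
  obtain q0 where q0: "0 < q0" "h * q0 < pi/2" "eig_eq a h q0" using root_exists[OF a0 h0 ah] by blast
  have "\<alpha> \<le> q0" using mn q0 by auto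
  hence "h * \<alpha> \<le> h * q0" using h0 by simp
  define x where "x = h * \<alpha>"
  have x0a: "0 < x" using h0 al0 by (simp add: x_def)
  have x0b: "x < pi/2" using q0(2) \<open>h * \<alpha> \<le> h * q0\<close> unfolding x_def by linarith
  note x0 = x0a x0b
  have cx: "cos x > 0" using x0 by (intro cos_gt_zero) auto
  have sx: "sin x > 0" using x0 by (intro sin_gt_zero) auto
  have tx: "tan x > 0" using x0 by (intro tan_gt_zero) auto
  have te: "tan x = 2 * a * \<alpha> / (\<alpha>\<^sup>2 - a\<^sup>2)" using eig unfolding eig_eq_def x_def .
  have "2 * a * \<alpha> > 0" using a0 al0 by simp
  hence dpos: "\<alpha>\<^sup>2 - a\<^sup>2 > 0" using te tx by (simp add: zero_less_divide_iff)
  have key: "sin x * (\<alpha>\<^sup>2 - a\<^sup>2) = 2 * a * \<alpha> * cos x"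
    using te cx dpos by (simp add: tan_def field_simps)
  have U: "h * (\<alpha>\<^sup>2 - a\<^sup>2) \<le> 2 * a"
  proof -
    have "x * cos x \<le> sin x" using x0 by (intro xcos_le_sin) auto
    hence "x * cos x * (\<alpha>\<^sup>2 - a\<^sup>2) \<le> sin x * (\<alpha>\<^sup>2 - a\<^sup>2)" using dpos by (intro mult_right_mono) auto
    hence "(h * (\<alpha>\<^sup>2 - a\<^sup>2)) * (\<alpha> * cos x) \<le> (2 * a) * (\<alpha> * cos x)"
      using key by (simp add: x_def algebra_simps)
    moreover have "\<alpha> * cos x > 0" using al0 cx by simp
    ultimately show ?thesis by (rule mult_right_le_imp_le)
  qed
  have L: "2 * a * (1 - x\<^sup>2 / 2) \<le> h * (\<alpha>\<^sup>2 - a\<^sup>2)"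
  proof -
    have "sin x \<le> x" using x0 by (intro sin_x_le_x) auto
    hence "sin x * (\<alpha>\<^sup>2 - a\<^sup>2) \<le> x * (\<alpha>\<^sup>2 - a\<^sup>2)" using dpos by (intro mult_right_mono) auto
    moreover have "2 * a * \<alpha> * (1 - x\<^sup>2 / 2) \<le> 2 * a * \<alpha> * cos x"
      using cos_ge_quad[of x] a0 al0 by (intro mult_left_mono) auto
    ultimately have "(2 * a * (1 - x\<^sup>2 / 2)) * \<alpha> \<le> (h * (\<alpha>\<^sup>2 - a\<^sup>2)) * \<alpha>"
      using key by (simp add: x_def algebra_simps)
    then show ?thesis using al0 by simp
  qed
  define b where "b = a * h"
  define y where "y = x\<^sup>2"
  have b0: "0 < b" "b \<le> 1/3" using a0 h0 ah by (auto simp: b_def)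
  have y0: "0 < y" using x0 by (simp add: y_def)
  have yx: "y = h\<^sup>2 * \<alpha>\<^sup>2" by (simp add: y_def x_def power_mult_distrib)
  have y2: "y \<le> 2*b + b\<^sup>2"
  proof -
    have "h * (h * (\<alpha>\<^sup>2 - a\<^sup>2)) \<le> h * (2 * a)" using U h0 by (intro mult_left_mono) auto
    then show ?thesis by (simp add: yx b_def power2_eq_square algebra_simps)
  qed
  have y1: "y * (1 + b) \<ge> 2*b + b\<^sup>2"
  proof -
    have "h * (2 * a * (1 - y / 2)) \<le> h * (h * (\<alpha>\<^sup>2 - a\<^sup>2))" using L h0 unfolding y_def by (intro mult_left_mono) auto
    then show ?thesis by (simp add: yx b_def power2_eq_square algebra_simps)
  qed
  define E where "E = exp (- \<alpha>\<^sup>2 * (t - s))"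
  have E0: "E > 0" by (simp add: E_def)
  define f where "f = (\<lambda>v. \<alpha> * cos (\<alpha> * v) + a * sin (\<alpha> * v))"
  have fup: "(f v)\<^sup>2 \<le> \<alpha>\<^sup>2 + a\<^sup>2" for v
  proof -
    have "(f v)\<^sup>2 + (\<alpha> * sin (\<alpha> * v) - a * cos (\<alpha> * v))\<^sup>2 = (\<alpha>\<^sup>2 + a\<^sup>2) * ((sin (\<alpha> * v))\<^sup>2 + (cos (\<alpha> * v))\<^sup>2)"
    proof -
      have gen: "\<And>p q::real. (\<alpha>*q + a*p)\<^sup>2 + (\<alpha>*p - a*q)\<^sup>2 = (\<alpha>\<^sup>2+a\<^sup>2)*(p\<^sup>2+q\<^sup>2)"
        by (simp add: power2_eq_square algebra_simps)
      show ?thesis unfolding f_def by (rule gen)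
    qed
    also have "\<dots> = \<alpha>\<^sup>2 + a\<^sup>2" by simp
    finally have "(f v)\<^sup>2 + (\<alpha> * sin (\<alpha> * v) - a * cos (\<alpha> * v))\<^sup>2 = \<alpha>\<^sup>2 + a\<^sup>2" .
    then show ?thesis using zero_le_power2[of "\<alpha> * sin (\<alpha> * v) - a * cos (\<alpha> * v)"] by linarith
  qed
  have flow: "f v \<ge> \<alpha> * (1 - y/2)" "\<alpha> * (1 - y/2) \<ge> 0" if v: "0 \<le> v" "v \<le> h" for v
  proof -
    have u0: "0 \<le> \<alpha> * v" "\<alpha> * v \<le> x" using v al0 by (auto simp: x_def mult_left_mono)
    have "(\<alpha> * v)\<^sup>2 \<le> y" unfolding y_def using u0 by (intro power_mono) auto
    hence "1 - y/2 \<le> cos (\<alpha> * v)" using cos_ge_quad[of "\<alpha> * v"] by linarith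
    hence "\<alpha> * (1 - y/2) \<le> \<alpha> * cos (\<alpha> * v)" using al0 by simp
    moreover have "sin (\<alpha> * v) \<ge> 0" using u0 x0 by (intro sin_ge_zero) auto
    hence "a * sin (\<alpha> * v) \<ge> 0" using a0 by simp
    ultimately show "f v \<ge> \<alpha> * (1 - y/2)" unfolding f_def by linarith
    have "b\<^sup>2 \<le> 1/9" using power_mono[of b "1/3" 2] b0 by (simp add: power_divide)
    hence "y \<le> 2" using y2 b0 by linarith
    then show "\<alpha> * (1 - y/2) \<ge> 0" using al0 by simp
  qed
  have prod_up: "f z * f w \<le> \<alpha>\<^sup>2 + a\<^sup>2"
  proof -
    have "2 * (f z * f w) \<le> (f z)\<^sup>2 + (f w)\<^sup>2"
      using zero_le_power2[of "f z - f w"] by (simp add: power2_eq_square algebra_simps)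
    then show ?thesis using fup[of z] fup[of w] by linarith
  qed
  have prod_low: "(\<alpha> * (1 - y/2))\<^sup>2 \<le> f z * f w"
    unfolding power2_eq_square using flow[of z] flow[of w] assms(5-8) by (intro mult_mono) auto
  define D where "D = 2 * a + h * (a\<^sup>2 + \<alpha>\<^sup>2)"
  have D0: "D > 0" using a0 h0 by (simp add: D_def add_pos_nonneg)
  have hD: "h * D = 2*b + b\<^sup>2 + y" by (simp add: D_def b_def yx power2_eq_square algebra_simps)
  have P: "P1 a h \<alpha> z t w s = E * (2 * (f z * f w) / D)"
    by (simp add: P1_def E_def f_def D_def)
  have R1: "\<alpha>\<^sup>2 / (2 * a) + 5/2 * h * \<alpha>\<^sup>2 = (y / (2*b) + 5/2 * y) / h"
    using a0 h0 by (simp add: yx b_def field_simps power2_eq_square)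
  have R2: "\<alpha>\<^sup>2 / (2 * a) - 5/2 * h * \<alpha>\<^sup>2 = y * (1 / (2*b) - 5/2) / h"
    using a0 h0 by (simp add: yx b_def field_simps power2_eq_square)
  have Q1: "2 * (\<alpha>\<^sup>2 + a\<^sup>2) / D = (2 * (y + b\<^sup>2) / (2*b + b\<^sup>2 + y)) / h"
    unfolding hD[symmetric] using h0 D0 by (simp add: yx b_def power2_eq_square field_simps)
  have Q2: "2 * (\<alpha> * (1 - y/2))\<^sup>2 / D = y * (2 * (1 - y/2)\<^sup>2 / (2*b + b\<^sup>2 + y)) / h"
    unfolding hD[symmetric] using h0 D0 by (simp add: yx b_def power2_eq_square field_simps)
  have up: "2 * (f z * f w) / D \<le> \<alpha>\<^sup>2 / (2 * a) + 5/2 * h * \<alpha>\<^sup>2"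
  proof -
    have "2 * (f z * f w) / D \<le> 2 * (\<alpha>\<^sup>2 + a\<^sup>2) / D"
      using prod_up D0 by (intro divide_right_mono) auto
    also have "\<dots> \<le> (y / (2*b) + 5/2 * y) / h"
      unfolding Q1 using poly_up[OF b0 y1 y2] h0 by (intro divide_right_mono) auto
    finally show ?thesis using R1 by simp
  qed
  have low: "2 * (f z * f w) / D \<ge> \<alpha>\<^sup>2 / (2 * a) - 5/2 * h * \<alpha>\<^sup>2"
  proof -
    have "2 * (\<alpha> * (1 - y/2))\<^sup>2 / D \<le> 2 * (f z * f w) / D"
      using prod_low D0 by (intro divide_right_mono) auto
    moreover have "y * (1 / (2*b) - 5/2) / h \<le> y * (2 * (1 - y/2)\<^sup>2 / (2*b + b\<^sup>2 + y)) / h"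
      using poly_low[OF b0 y0 y2] h0 y0 by (intro divide_right_mono mult_left_mono) auto
    ultimately show ?thesis using R2 Q2 by simp
  qed
  have "\<bar>2 * (f z * f w) / D - \<alpha>\<^sup>2 / (2 * a)\<bar> \<le> 5/2 * h * \<alpha>\<^sup>2" using up low by linarith
  hence "E * \<bar>2 * (f z * f w) / D - \<alpha>\<^sup>2 / (2 * a)\<bar> \<le> E * (5/2 * h * \<alpha>\<^sup>2)"
    using E0 by (intro mult_left_mono) auto
  moreover have "\<bar>P1 a h \<alpha> z t w s - \<alpha>\<^sup>2 / (2 * a) * E\<bar> = E * \<bar>2 * (f z * f w) / D - \<alpha>\<^sup>2 / (2 * a)\<bar>"
  proof -
    have "P1 a h \<alpha> z t w s - \<alpha>\<^sup>2 / (2 * a) * E = E * (2 * (f z * f w) / D - \<alpha>\<^sup>2 / (2 * a))"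
      unfolding P by (simp add: right_diff_distrib mult.commute)
    then show ?thesis using E0 by (simp add: abs_mult)
  qed
  ultimately show ?thesis unfolding E_def by (simp add: mult.commute mult.left_commute)
qed

end
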